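(* Let $L$ be a locale and let $F$ be a sheaf of monomorphisms on $L_{+}$. For every $x \in F(i)$, the set $\{c \in L : x \in F(c)\}$ has a (unique) maximum element $s_x$; that is, $s_x = \bigvee_{x \in F(c)} c$ satisfies $x \in F(s_x)$.
   Context: A locale (frame) $L$ is a complete lattice in which finite meets distribute over arbitrary joins. It carries a Grothendieck topology in which a family $\{b_j \le a\}$ covers $a$ iff $\bigvee_j b_j = a$; a sieve on $a$ (a downward closed set of elements $\le a$) is covering iff its join is $a$. A presheaf on $L$ is a functor $L^{op}\to\mathbf{Set}$; it is a sheaf if $F(a)\to\varprojlim_{b\in R}F(b)$ is a bijection for every covering sieve $R$ of every $a$. Write $i$ for the bottom (initial) element of $L$, and $L_{+}=L\sqcup\{0\}$ for the locale obtained by adjoining a new bottom element $0<i$. A sheaf of monomorphisms on $L_{+}$ is a sheaf $F$ on $L_{+}$ such that for every relation $a\le b$ in $L$ the restriction $F(b)\to F(a)$ is injective. The set $F(i)$ is the generic fibre; for $c\in L$, since $F(c)\to F(i)$ is injective, we regard $F(c)$ as a subset of $F(i)$ and write $x\in F(c)$ for $x\in F(i)$ lying in the image of $F(c)\to F(i)$. *)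

theory Defs
  imports Main
begin

definition is_frame :: "'a::complete_lattice itself \<Rightarrow> bool" where
  "is_frame _ \<longleftrightarrow> (\<forall>(a::'a) S. inf a (Sup S) = Sup ((\<lambda>b. inf a b) ` S))"

text \<open>The locale L_+ = L with a new bottom 0 adjoined, modelled as 'a option:
  None is the new bottom 0, Some c is the element c of L.\<close>
definition leq_plus :: "'a::complete_lattice option \<Rightarrow> 'a option \<Rightarrow> bool" where
  "leq_plus u v = (case u of None \<Rightarrow> True
                    | Some a \<Rightarrow> (case v of None \<Rightarrow> False | Some b \<Rightarrow> a \<le> b))"

definition Sup_plus :: "'a::complete_lattice option set \<Rightarrow> 'a option" where
  "Sup_plus R = (if \<exists>c. Some c \<in> R then Some (Sup {c. Some c \<in> R}) else None)"

definition presheaf_plus ::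
  "('a::complete_lattice option \<Rightarrow> 'x set) \<Rightarrow> ('a option \<Rightarrow> 'a option \<Rightarrow> 'x \<Rightarrow> 'x) \<Rightarrow> bool" where
  "presheaf_plus F r \<longleftrightarrow>
     (\<forall>u v. leq_plus u v \<longrightarrow> (\<forall>x\<in>F v. r u v x \<in> F u)) \<and>
     (\<forall>u. \<forall>x\<in>F u. r u u x = x) \<and>
     (\<forall>u v w. leq_plus u v \<longrightarrow> leq_plus v w \<longrightarrow> (\<forall>x\<in>F w. r u v (r v w x) = r u w x))"

definition covering_sieve_plus :: "'a::complete_lattice option \<Rightarrow> 'a option set \<Rightarrow> bool" where
  "covering_sieve_plus a R \<longleftrightarrow>
     (\<forall>b\<in>R. leq_plus b a) \<and> (\<forall>b\<in>R. \<forall>c. leq_plus c b \<longrightarrow> c \<in> R) \<and> Sup_plus R = a"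

definition sheaf_plus ::
  "('a::complete_lattice option \<Rightarrow> 'x set) \<Rightarrow> ('a option \<Rightarrow> 'a option \<Rightarrow> 'x \<Rightarrow> 'x) \<Rightarrow> bool" where
  "sheaf_plus F r \<longleftrightarrow> presheaf_plus F r \<and>
     (\<forall>a R. covering_sieve_plus a R \<longrightarrow>
        (\<forall>s. ((\<forall>b\<in>R. s b \<in> F b) \<and> (\<forall>b\<in>R. \<forall>c\<in>R. leq_plus c b \<longrightarrow> r c b (s b) = s c))
             \<longrightarrow> (\<exists>!x. x \<in> F a \<and> (\<forall>b\<in>R. r b a x = s b))))"

definition sheaf_of_monos_plus ::
  "('a::complete_lattice option \<Rightarrow> 'x set) \<Rightarrow> ('a option \<Rightarrow> 'a option \<Rightarrow> 'x \<Rightarrow> 'x) \<Rightarrow> bool" where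
  "sheaf_of_monos_plus F r \<longleftrightarrow> sheaf_plus F r \<and>
     (\<forall>a b::'a. a \<le> b \<longrightarrow> inj_on (r (Some a) (Some b)) (F (Some b)))"

text \<open>x \<in> F(c) for x in the generic fibre F(i), i = bot.\<close>
definition in_fibre ::
  "('a::complete_lattice option \<Rightarrow> 'x set) \<Rightarrow> ('a option \<Rightarrow> 'a option \<Rightarrow> 'x \<Rightarrow> 'x) \<Rightarrow> 'x \<Rightarrow> 'a \<Rightarrow> bool" where
  "in_fibre F r x c \<longleftrightarrow> x \<in> r (Some bot) (Some c) ` F (Some c)"

end

theory Submission
  imports Defs
begin

theorem lemma11:
  fixes F :: "'a::complete_lattice option \<Rightarrow> 'x set"
    and r :: "'a option \<Rightarrow> 'a option \<Rightarrow> 'x \<Rightarrow> 'x"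
  assumes "is_frame TYPE('a)"
    and "sheaf_of_monos_plus F r"
    and "x \<in> F (Some bot)"
  shows "in_fibre F r x (Sup {c. in_fibre F r x c})"
proof -
  have sh: "sheaf_plus F r" and inj: "\<And>a b::'a. a \<le> b \<Longrightarrow> inj_on (r (Some a) (Some b)) (F (Some b))"
    using assms(2) unfolding sheaf_of_monos_plus_def by auto
  have pre: "presheaf_plus F r" using sh unfolding sheaf_plus_def by auto
  have rF: "\<And>u v y. leq_plus u v \<Longrightarrow> y \<in> F v \<Longrightarrow> r u v y \<in> F u"
    using pre unfolding presheaf_plus_def by blast
  have rid: "\<And>u y. y \<in> F u \<Longrightarrow> r u u y = y"
    using pre unfolding presheaf_plus_def by blast
  have rcomp: "\<And>u v w y. leq_plus u v \<Longrightarrow> leq_plus v w \<Longrightarrow> y \<in> F w \<Longrightarrow> r u v (r v w y) = r u w y"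
    using pre unfolding presheaf_plus_def by blast
  have lS: "\<And>a b. leq_plus (Some a) (Some b) = (a \<le> b)" by (simp add: leq_plus_def)
  have lN: "\<And>v. leq_plus None v" by (simp add: leq_plus_def)
  define C where "C = {c. in_fibre F r x c}"
  define P where "P = (\<lambda>b y. y \<in> F (Some b) \<and> r (Some bot) (Some b) y = x)"
  have ex1: "\<exists>!y. P b y" if "b \<le> c" "c \<in> C" for b c
  proof -
    from that obtain yc where yc: "yc \<in> F (Some c)" "r (Some bot) (Some c) yc = x"
      unfolding C_def in_fibre_def by auto
    have "P b (r (Some b) (Some c) yc)"
      unfolding P_def using yc that rF rcomp lS by (metis bot.extremum)
    moreover have "y1 = y2" if "P b y1" "P b y2" for y1 y2
      using inj[of bot b] that unfolding P_def inj_on_def by auto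
    ultimately show ?thesis by blast
  qed
  have botC: "bot \<in> C" unfolding C_def in_fibre_def using assms(3) rid by force
  define R where "R = insert None {Some b | b. \<exists>c\<in>C. b \<le> c}"
  define S where "S = Sup C"
  have cov: "covering_sieve_plus (Some S) R"
  proof -
    have "{c. Some c \<in> R} = {b. \<exists>c\<in>C. b \<le> c}" unfolding R_def by auto
    moreover have "Sup {b. \<exists>c\<in>C. b \<le> c} = Sup C"
      by (rule antisym) (auto intro: Sup_least Sup_upper Sup_upper2)
    moreover have "\<exists>c. Some c \<in> R" unfolding R_def using botC by auto
    ultimately have "Sup_plus R = Some S" unfolding Sup_plus_def S_def by simp
    moreover have "\<forall>b\<in>R. leq_plus b (Some S)"
      unfolding R_def S_def leq_plus_def by (auto intro: Sup_upper2)
    moreover have "\<forall>b\<in>R. \<forall>c. leq_plus c b \<longrightarrow> c \<in> R"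
      unfolding R_def leq_plus_def by (auto split: option.splits intro: order_trans)
    ultimately show ?thesis unfolding covering_sieve_plus_def by blast
  qed
  define s where "s = (\<lambda>u. case u of None \<Rightarrow> r None (Some bot) x | Some b \<Rightarrow> (THE y. P b y))"
  have sP: "P b (s (Some b))" if "Some b \<in> R" for b
  proof -
    from that obtain c where "c \<in> C" "b \<le> c" unfolding R_def by auto
    from ex1[OF this(2,1)] show ?thesis unfolding s_def by (simp add: theI')
  qed
  have sF: "\<forall>b\<in>R. s b \<in> F b"
  proof
    fix b assume "b \<in> R"
    show "s b \<in> F b"
    proof (cases b)
      case None then show ?thesis unfolding s_def using rF[OF lN assms(3)] by simp
    next
      case (Some a) then show ?thesis using sP \<open>b \<in> R\<close> unfolding P_def by auto
    qed
  qed
  have match: "\<forall>b\<in>R. \<forall>c\<in>R. leq_plus c b \<longrightarrow> r c b (s b) = s c"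
  proof (intro ballI impI)
    fix b c assume bR: "b \<in> R" and cR: "c \<in> R" and cb: "leq_plus c b"
    show "r c b (s b) = s c"
    proof (cases b)
      case None
      then have "c = None" using cb by (cases c) (auto simp: leq_plus_def)
      then show ?thesis using None sF bR rid by auto
    next
      case (Some b')
      have Pb: "P b' (s (Some b'))" using sP bR Some by simp
      show ?thesis
      proof (cases c)
        case None
        have "r None (Some b') (s (Some b')) = r None (Some bot) (r (Some bot) (Some b') (s (Some b')))"
          using rcomp[of None "Some bot" "Some b'" "s (Some b')"] Pb lN lS unfolding P_def by (metis bot.extremum)
        then show ?thesis using None Some Pb unfolding P_def s_def by simp
      next
        case (Some c')
        have cb': "c' \<le> b'" using cb Some \<open>b = Some b'\<close> by (simp add: leq_plus_def)
        from cR Some obtain d where d: "d \<in> C" "c' \<le> d" unfolding R_def by auto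
        have "P c' (r (Some c') (Some b') (s (Some b')))"
          unfolding P_def using Pb cb' rF rcomp lS unfolding P_def by (metis bot.extremum)
        moreover have "P c' (s (Some c'))" using sP cR Some by simp
        ultimately show ?thesis using ex1[OF d(2,1)] Some \<open>b = Some b'\<close> by auto
      qed
    qed
  qed
  obtain z where z: "z \<in> F (Some S)" "\<forall>b\<in>R. r b (Some S) z = s b"
    using sh cov sF match unfolding sheaf_plus_def by blast
  have "Some bot \<in> R" unfolding R_def using botC by auto
  then have "r (Some bot) (Some S) z = x" using z sP[of bot] rid unfolding P_def by auto
  then have "x \<in> r (Some bot) (Some S) ` F (Some S)" using z(1) by (metis image_eqI)
  then show ?thesis unfolding in_fibre_def S_def C_def .
qed

end
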